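(* Let $\delta\in\mathbb R$ and $\nu\in[0,\pi)$, and consider the equation $\mathcal P(\sigma;\delta,\nu)=0$ for $\sigma\in[0,2\pi)$. If $(\delta,\nu)\in\Omega_+$, this equation has exactly four distinct roots in $[0,2\pi)$. If $(\delta,\nu)\in\Omega_-$, it has exactly two distinct roots in $[0,2\pi)$. Moreover, if $(\delta,\nu)\notin\gamma_+\cup\gamma_-$, then every root $\sigma$ satisfies $\mathcal P'(\sigma;\delta,\nu)\neq 0$. Finally, if $\sigma$ is a root with $\mathcal P'(\sigma;\delta,\nu)=\mathcal P''(\sigma;\delta,\nu)=0$, then $\nu=0$, $\sin\sigma=0$ and $\mathcal P'''(\sigma;\delta,\nu)=-3\cos\sigma\neq0$.
   Context: $\mathcal P(\sigma;\delta,\nu):=\delta\sin(2\sigma+\nu)-\sin\sigma$; primes on $\mathcal P$ denote derivatives with respect to $\sigma$. Let $\gamma(\delta,\nu):=(4\delta^2-1)^3-27\delta^2\sin^2\nu$. Define $\Omega_\pm:=\{(\delta,\nu)\in\mathbb R\times[0,\pi):\pm\gamma(\delta,\nu)>0\}$ and $\gamma_\pm:=\{(\delta,\nu)\in\mathbb R\times[0,\pi):\gamma(\delta,\nu)=0,\ \pm\delta>0\}$. *)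

theory Defs
  imports "HOL-Analysis.Analysis"
begin

definition PP :: "real \<Rightarrow> real \<Rightarrow> real \<Rightarrow> real" where
  "PP \<sigma> \<delta> \<nu> = \<delta> * sin (2 * \<sigma> + \<nu>) - sin \<sigma>"

definition PPd :: "nat \<Rightarrow> real \<Rightarrow> real \<Rightarrow> real \<Rightarrow> real" where
  "PPd k \<sigma> \<delta> \<nu> = (deriv ^^ k) (\<lambda>s. PP s \<delta> \<nu>) \<sigma>"

definition gam :: "real \<Rightarrow> real \<Rightarrow> real" where
  "gam \<delta> \<nu> = (4 * \<delta>^2 - 1)^3 - 27 * \<delta>^2 * (sin \<nu>)^2"

definition Omega_plus :: "(real \<times> real) set" where
  "Omega_plus = {(\<delta>, \<nu>). 0 \<le> \<nu> \<and> \<nu> < pi \<and> gam \<delta> \<nu> > 0}"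

definition Omega_minus :: "(real \<times> real) set" where
  "Omega_minus = {(\<delta>, \<nu>). 0 \<le> \<nu> \<and> \<nu> < pi \<and> gam \<delta> \<nu> < 0}"

definition gamma_plus :: "(real \<times> real) set" where
  "gamma_plus = {(\<delta>, \<nu>). 0 \<le> \<nu> \<and> \<nu> < pi \<and> gam \<delta> \<nu> = 0 \<and> \<delta> > 0}"

definition gamma_minus :: "(real \<times> real) set" where
  "gamma_minus = {(\<delta>, \<nu>). 0 \<le> \<nu> \<and> \<nu> < pi \<and> gam \<delta> \<nu> = 0 \<and> \<delta> < 0}"

end

theory Submission
  imports Defs
begin

definition disc4 :: "real \<Rightarrow> real \<Rightarrow> real \<Rightarrow> real \<Rightarrow> real \<Rightarrow> real" where
 "disc4 a b c d e = 256*a^3*e^3 - 192*a^2*b*d*e^2 - 128*a^2*c^2*e^2 + 144*a^2*c*d^2*e - 27*a^2*d^4 + 144*a*b^2*c*e^2 - 6*a*b^2*d^2*e - 80*a*b*c^2*d*e + 18*a*b*c*d^3 + 16*a*c^4*e - 4*a*c^3*d^2 - 27*b^4*e^2 + 18*b^3*c*d*e - 4*b^3*d^3 - 4*b^2*c^3*e + b^2*c^2*d^2"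

lemma disc_fact: "disc4 k (k*(pp-uu)) (k*(qq-uu * pp+mm)) (k*(mm*pp-uu * qq)) (k*(mm*qq)) =
   k^6*((uu^2-4*mm)*(pp^2-4*qq)*(mm^2 + pp*mm * uu + qq*(uu^2-2*mm) + pp^2*mm + pp*qq * uu + qq^2)^2)"
  unfolding disc4_def by algebra

lemma disc_R: assumes "a^2+b^2 = (1::real)"
  shows "disc4 (4*d^2) (-4*a*d) (a^2+b^2-4*d^2) (2*a*d) (d^2-b^2) = 64*d^2*b^4*((4*d^2-1)^3 - 27*d^2*(2*b^2-1)^2)"
proof -
  have a2: "a^2 = 1 - b^2" using assms by simp
  have "disc4 (4*d^2) (-4*a*d) (a^2+b^2-4*d^2) (2*a*d) (d^2-b^2) = disc4 (4*d^2) (-4*a*d) (1-4*d^2) (2*a*d) (d^2-b^2)"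
    using assms by simp
  also have "\<dots> = 64*d^2*b^4*((4*d^2-1)^3 - 27*d^2*(2*b^2-1)^2)"
    using a2 unfolding disc4_def by algebra
  finally show ?thesis .
qed

definition Rq :: "real \<Rightarrow> real \<Rightarrow> real \<Rightarrow> real \<Rightarrow> real" where
  "Rq a b d X = (d*(2*X^2-1) - a*X)^2 - b^2*(1-X^2)"

lemma two_roots:
  fixes a b d :: real
  assumes b: "b > 0"
  obtains r1 r2 where "r1 < r2" "Rq a b d r1 = 0" "Rq a b d r2 = 0"
proof -
  define k where "k = sqrt 2 / 2"
  have k2: "k^2 = 1/2" unfolding k_def by (simp add: power_divide)
  have k0: "0 < k" unfolding k_def by simp
  have k1: "k < 1" unfolding k_def by (simp add: sqrt2_less_2)
  define f where "f X = d*(2*X^2-1) - a*X" for X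
  have fk: "f k = - a*k" "f (-k) = a*k" unfolding f_def using k2 by auto
  have cf: "continuous_on {-k..k} f" unfolding f_def by (intro continuous_intros)
  have "\<exists>X0. -k \<le> X0 \<and> X0 \<le> k \<and> f X0 = 0"
  proof (cases "a \<ge> 0")
    case True
    then show ?thesis using IVT2'[of f k 0 "-k", OF _ _ _ cf] fk k0 by (auto simp: mult_nonneg_nonneg)
  next
    case False
    then show ?thesis using IVT'[of f "-k" 0 k, OF _ _ _ cf] fk k0
      by (auto simp: mult_nonneg_nonneg mult_nonpos_nonneg)
  qed
  then obtain X0 where X0: "-k \<le> X0" "X0 \<le> k" "f X0 = 0" by blast
  have X0sq: "X0^2 < 1"
  proof -
    have "\<bar>X0\<bar> < 1" using X0 k1 by auto
    then show ?thesis by (simp add: abs_square_less_1)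
  qed
  have RX0: "Rq a b d X0 < 0" using X0(3) X0sq b unfolding Rq_def f_def by simp
  have Rm1: "Rq a b d (-1) \<ge> 0" unfolding Rq_def by simp
  have Rp1: "Rq a b d 1 \<ge> 0" unfolding Rq_def by simp
  have X0b: "-1 < X0" "X0 < 1" using X0 k1 by auto
  have cR: "continuous_on S (Rq a b d)" for S unfolding Rq_def by (intro continuous_intros)
  obtain r1 where r1: "-1 \<le> r1" "r1 \<le> X0" "Rq a b d r1 = 0"
    using IVT2'[of "Rq a b d" X0 0 "-1", OF _ _ _ cR] RX0 Rm1 X0b by auto
  obtain r2 where r2: "X0 \<le> r2" "r2 \<le> 1" "Rq a b d r2 = 0"
    using IVT'[of "Rq a b d" X0 0 1, OF _ _ _ cR] RX0 Rp1 X0b by auto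
  have "r1 \<noteq> X0" "r2 \<noteq> X0" using r1 r2 RX0 by auto
  then have "r1 < r2" using r1 r2 by auto
  then show ?thesis using that r1 r2 by blast
qed


lemma quartic_count:
  fixes a b d :: real
  assumes ab: "a^2+b^2=1" and b: "b>0" and d: "d\<noteq>0"
  shows "((4*d^2-1)^3 - 27*d^2*(2*b^2-1)^2 > 0 \<longrightarrow> card {X. Rq a b d X = 0} = 4)
       \<and> ((4*d^2-1)^3 - 27*d^2*(2*b^2-1)^2 < 0 \<longrightarrow> card {X. Rq a b d X = 0} = 2)"
proof -
  define G where "G = (4*d^2-1)^3 - 27*d^2*(2*b^2-1)^2"
  obtain r1 r2 where r: "r1 < r2" "Rq a b d r1 = 0" "Rq a b d r2 = 0"
    using two_roots[OF b] by blast
  define c where "c = 4*d^2"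
  have c0: "c > 0" using d unfolding c_def by simp
  define uu where "uu = r1 + r2"
  define mm where "mm = r1 * r2"
  define pp where "pp = -a/d + uu"
  define qq where "qq = (a^2+b^2-4*d^2)/(4*d^2) + uu*pp - mm"
  have hp: "c*pp = -4*a*d + c*uu" unfolding c_def pp_def using d by (simp add: field_simps power2_eq_square)
  have hq: "c*qq = a^2+b^2-4*d^2 + c*(uu*pp - mm)" unfolding c_def qq_def using d by (simp add: field_simps)
  define \<alpha> where "\<alpha> = 2*a*d - c*(mm*pp - uu*qq)"
  define \<beta> where "\<beta> = d^2-b^2 - c*mm*qq"
  have key: "Rq a b d X = c*(X^2-uu*X+mm)*(X^2+pp*X+qq) + \<alpha>*X + \<beta>" for X
  proof -
    have "Rq a b d X = c*X^4 + (-4*a*d)*X^3 + (a^2+b^2-4*d^2)*X^2 + 2*a*d*X + (d^2-b^2)"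
      unfolding Rq_def c_def by algebra
    also have "\<dots> = c*(X^2-uu*X+mm)*(X^2+pp*X+qq) + \<alpha>*X + \<beta>"
      unfolding \<alpha>_def \<beta>_def using hp hq by algebra
    finally show ?thesis .
  qed
  have z1: "r1^2 - uu*r1 + mm = 0" "r2^2 - uu*r2 + mm = 0" unfolding uu_def mm_def by algebra+
  have e1: "\<alpha>*r1 + \<beta> = 0" using key[of r1] r(2) z1 by simp
  have e2: "\<alpha>*r2 + \<beta> = 0" using key[of r2] r(3) z1 by simp
  have "\<alpha>*(r1 - r2) = 0" using e1 e2 by algebra
  then have \<alpha>0: "\<alpha> = 0" using r(1) by simp
  then have \<beta>0: "\<beta> = 0" using e1 by simp
  define Q where "Q X = X^2+pp*X+qq" for X
  have fac: "Rq a b d X = c*(X-r1)*(X-r2)*Q X" for X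
    using key[of X] \<alpha>0 \<beta>0 unfolding Q_def uu_def mm_def by algebra
  have roots: "Rq a b d X = 0 \<longleftrightarrow> X = r1 \<or> X = r2 \<or> Q X = 0" for X
    using fac[of X] c0 by auto
  define res where "res = mm^2 + pp*mm * uu + qq*(uu^2-2*mm) + pp^2*mm + pp*qq * uu + qq^2"
  have resQ: "res = Q r1 * Q r2" unfolding res_def Q_def mm_def uu_def by algebra
  have D1: "disc4 (4*d^2) (-4*a*d) (a^2+b^2-4*d^2) (2*a*d) (d^2-b^2) = 64*d^2*b^4*G"
    unfolding G_def using disc_R[OF ab] .
  have "disc4 (4*d^2) (-4*a*d) (a^2+b^2-4*d^2) (2*a*d) (d^2-b^2)
      = disc4 c (c*(pp-uu)) (c*(qq-uu * pp+mm)) (c*(mm*pp-uu * qq)) (c*(mm*qq))"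
  proof -
    have f1: "c*(pp-uu) = -4*a*d" using hp by (simp add: algebra_simps)
    have f2: "c*(qq-uu * pp+mm) = a^2+b^2-4*d^2" using hq by (simp add: algebra_simps)
    have f3: "c*(mm*pp-uu * qq) = 2*a*d" using \<alpha>0 unfolding \<alpha>_def by (simp add: algebra_simps)
    have f4: "c*(mm*qq) = d^2-b^2" using \<beta>0 unfolding \<beta>_def by (simp add: algebra_simps)
    show ?thesis unfolding f1 f2 f3 f4 unfolding c_def ..
  qed
  also have "\<dots> = c^6*((uu^2-4*mm)*(pp^2-4*qq)*res^2)" unfolding res_def by (rule disc_fact)
  finally have DD: "c^6*((uu^2-4*mm)*(pp^2-4*qq)*res^2) = 64*d^2*b^4*G" using D1 by simp
  have sm: "uu^2-4*mm > 0"
  proof -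
    have "uu^2-4*mm = (r1-r2)^2" unfolding uu_def mm_def by algebra
    then show ?thesis using r(1) by simp
  qed
  have pos: "64*d^2*b^4 > 0" using d b by simp
  have c6: "c^6 > 0" using c0 by simp
  show ?thesis unfolding G_def[symmetric]
  proof (intro conjI impI)
    assume G: "G > 0"
    then have "c^6*((uu^2-4*mm)*(pp^2-4*qq)*res^2) > 0" using DD pos by simp
    then have "(uu^2-4*mm)*((pp^2-4*qq)*res^2) > 0" using c6 zero_less_mult_pos by (metis mult.assoc)
    then have "(pp^2-4*qq)*res^2 > 0" using sm zero_less_mult_pos by blast
    then have Dp: "pp^2-4*qq > 0" and resnz: "res \<noteq> 0" by (auto simp: zero_less_mult_iff)
    have Q1: "Q r1 \<noteq> 0" "Q r2 \<noteq> 0" using resnz resQ by auto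
    define t1 where "t1 = (-pp + sqrt (pp^2-4*qq))/2"
    define t2 where "t2 = (-pp - sqrt (pp^2-4*qq))/2"
    have sq: "(sqrt (pp^2-4*qq))^2 = pp^2-4*qq" using Dp by simp
    have sqp: "sqrt (pp^2-4*qq) > 0" using Dp by simp
    have Qf: "Q X = (X-t1)*(X-t2)" for X
      unfolding Q_def t1_def t2_def using sq by algebra
    have rs: "{X. Rq a b d X = 0} = {r1,r2,t1,t2}" using roots Qf by auto
    have "t1 \<noteq> t2" unfolding t1_def t2_def using sqp by simp
    moreover have "t1 \<noteq> r1" "t1 \<noteq> r2" "t2 \<noteq> r1" "t2 \<noteq> r2" using Q1 Qf by auto
    ultimately show "card {X. Rq a b d X = 0} = 4" unfolding rs using r(1) by auto
  next
    assume G: "G < 0"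
    then have "c^6*((uu^2-4*mm)*(pp^2-4*qq)*res^2) < 0" using DD pos by (simp add: mult_pos_neg)
    then have "(uu^2-4*mm)*((pp^2-4*qq)*res^2) < 0" using c6
      by (metis mult.assoc mult_pos_pos not_less_iff_gr_or_eq mult_eq_0_iff order.asym zero_less_mult_iff)
    then have "(pp^2-4*qq)*res^2 < 0" using sm
      by (metis mult_nonneg_nonneg not_less less_imp_le)
    then have Dn: "pp^2-4*qq < 0" by (auto simp: mult_less_0_iff)
    have "Q X \<noteq> 0" for X
    proof -
      have "4 * Q X = (2*X+pp)^2 + (4*qq - pp^2)" unfolding Q_def by algebra
      moreover have "(2*X+pp)^2 + (4*qq - pp^2) > 0" using Dn by (simp add: add_nonneg_pos)
      ultimately show ?thesis by auto
    qed
    then have rs: "{X. Rq a b d X = 0} = {r1,r2}" using roots by auto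
    show "card {X. Rq a b d X = 0} = 2" unfolding rs using r(1) by auto
  qed
qed

lemma zero_count:
  fixes a b :: real
  assumes ab: "a^2+b^2=1" and b: "b>0"
  shows "card {X. Rq a b 0 X = 0} = 2"
proof -
  have "Rq a b 0 X = 0 \<longleftrightarrow> X = b \<or> X = -b" for X
  proof -
    have "Rq a b 0 X = X^2 - b^2" unfolding Rq_def using ab by algebra
    then show ?thesis by (auto simp: power2_eq_iff)
  qed
  then have "{X. Rq a b 0 X = 0} = {b, -b}" by auto
  then show ?thesis using b by simp
qed


lemma deriv1: "deriv (\<lambda>x. PP x d v) = (\<lambda>x. 2*d*cos(2*x+v) - cos x)"
proof (rule ext, rule DERIV_imp_deriv)
  fix x show "((\<lambda>x. PP x d v) has_real_derivative 2*d*cos(2*x+v) - cos x) (at x)"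
    unfolding PP_def by (auto intro!: derivative_eq_intros)
qed

lemma deriv2: fixes d v :: real shows "deriv (\<lambda>x. 2*d*cos(2*x+v) - cos x) = (\<lambda>x. -4*d* sin(2*x+v) + sin x)"
proof (rule ext, rule DERIV_imp_deriv)
  fix x show "((\<lambda>x. 2*d*cos(2*x+v) - cos x) has_real_derivative -4*d* sin(2*x+v) + sin x) (at x)"
    by (auto intro!: derivative_eq_intros)
qed

lemma deriv3: fixes d v :: real shows "deriv (\<lambda>x. -4*d* sin(2*x+v) + sin x) = (\<lambda>x. -8*d*cos(2*x+v) + cos x)"
proof (rule ext, rule DERIV_imp_deriv)
  fix x show "((\<lambda>x. -4*d* sin(2*x+v) + sin x) has_real_derivative -8*d*cos(2*x+v) + cos x) (at x)"
    by (auto intro!: derivative_eq_intros)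
qed

lemma PPd1: "PPd 1 x d v = 2*d*cos(2*x+v) - cos x"
  unfolding PPd_def by (simp add: deriv1)
lemma PPd2: "PPd 2 x d v = -4*d* sin(2*x+v) + sin x"
  unfolding PPd_def numeral_2_eq_2 by (simp only: funpow.simps comp_apply id_apply deriv1 deriv2)
lemma PPd3: "PPd 3 x d v = -8*d*cos(2*x+v) + cos x"
  unfolding PPd_def numeral_3_eq_3 by (simp only: funpow.simps comp_apply id_apply deriv1 deriv2 deriv3)


lemma roots_card:
  fixes d v :: real
  assumes v0: "0 \<le> v" and v1: "v < pi"
  defines "th \<equiv> pi/4 - v/2"
  shows "card {x\<in>{0..<2*pi}. PP x d v = 0} = card {X. Rq (sin th) (cos th) d X = 0}"
    and "sin th ^2 + cos th ^2 = 1" and "cos th > 0" and "sin v = 2 * cos th ^ 2 - 1"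
proof -
  define a where "a = sin th"
  define b where "b = cos th"
  have ab: "a^2 + b^2 = 1" unfolding a_def b_def by simp
  have b0: "b > 0" unfolding b_def th_def using v0 v1 by (intro cos_gt_zero_pi) auto
  have sv: "sin v = 2 * b^2 - 1"
  proof -
    have "cos (2 * th) = sin v" unfolding th_def by (simp add: right_diff_distrib cos_diff)
    then show ?thesis unfolding b_def by (simp add: cos_double_cos)
  qed
  have PPe: "PP x d v = d * (2 * cos (x - th)^2 - 1) - a * cos (x - th) - b * sin (x - th)" for x
  proof -
    have e1: "2 * x + v = 2 * (x - th) + pi/2" unfolding th_def by (simp add: field_simps)
    have "sin (2 * x + v) = cos (2 * (x - th))" unfolding e1 by (simp add: sin_add)
    also have "\<dots> = 2 * cos (x - th)^2 - 1" by (rule cos_double_cos)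
    finally have s1: "sin (2 * x + v) = 2 * cos (x - th)^2 - 1" .
    have "sin x = sin ((x - th) + th)" by simp
    also have "\<dots> = a * cos (x - th) + b * sin (x - th)" unfolding a_def b_def sin_add by simp
    finally show ?thesis unfolding PP_def s1 by simp
  qed
  define S where "S = {x\<in>{0..<2*pi}. PP x d v = 0}"
  define f where "f x = cos (x - th)" for x
  have Yeq: "sin (x - th) = (d * (2 * cos (x - th)^2 - 1) - a * cos (x - th)) / b" if "x \<in> S" for x
    using that PPe[of x] b0 unfolding S_def by (simp add: field_simps)
  have inj: "inj_on f S"
  proof (rule inj_onI)
    fix x y assume x: "x \<in> S" and y: "y \<in> S" and fxy: "f x = f y"
    have c: "cos (x - th) = cos (y - th)" using fxy unfolding f_def .
    have sn: "sin (x - th) = sin (y - th)" using Yeq[OF x] Yeq[OF y] c by simp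
    have "cos (x - y) = cos ((x - th) - (y - th))" by simp
    also have "\<dots> = cos (x - th) * cos (y - th) + sin (x - th) * sin (y - th)" by (rule cos_diff)
    also have "\<dots> = 1" unfolding c sn by (simp add: power2_eq_square[symmetric])
    finally obtain n :: int where n: "x - y = real_of_int n * 2 * pi" using cos_one_2pi_int by blast
    have xr: "0 \<le> x" "x < 2*pi" "0 \<le> y" "y < 2*pi" using x y unfolding S_def by auto
    have h: "real_of_int n * (2*pi) = x - y" using n by (simp add: mult.assoc)
    have "real_of_int n < 1"
    proof (rule ccontr)
      assume "\<not> real_of_int n < 1"
      then have "1 * (2*pi) \<le> real_of_int n * (2*pi)" by (intro mult_right_mono) auto
      then show False using h xr by linarith
    qed
    moreover have "-1 < real_of_int n"
    proof (rule ccontr)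
      assume "\<not> -1 < real_of_int n"
      then have "real_of_int n * (2*pi) \<le> (-1) * (2*pi)" by (intro mult_right_mono) auto
      then show False using h xr by linarith
    qed
    ultimately have "n = 0" by linarith
    then show "x = y" using n by simp
  qed
  have img: "f ` S = {X. Rq a b d X = 0}"
  proof (intro equalityI subsetI)
    fix X assume "X \<in> f ` S"
    then obtain x where x: "x \<in> S" and X: "X = f x" by blast
    have "PP x d v = 0" using x unfolding S_def by simp
    then have bY: "b * sin (x - th) = d * (2 * X^2 - 1) - a * X" using PPe[of x] unfolding X f_def by simp
    have sc: "sin (x - th)^2 + X^2 = 1" unfolding X f_def by simp
    have "Rq a b d X = (b * sin (x - th))^2 - b^2 * (1 - X^2)" unfolding Rq_def bY ..
    also have "\<dots> = b^2 * (sin (x - th)^2 + X^2 - 1)" by algebra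
    also have "\<dots> = 0" using sc by simp
    finally show "X \<in> {X. Rq a b d X = 0}" by simp
  next
    fix X assume "X \<in> {X. Rq a b d X = 0}"
    then have R: "Rq a b d X = 0" by simp
    define Y where "Y = (d * (2 * X^2 - 1) - a * X) / b"
    have bY: "b * Y = d * (2 * X^2 - 1) - a * X" unfolding Y_def using b0 by simp
    have "b^2 * (X^2 + Y^2 - 1) = Rq a b d X" unfolding Rq_def bY[symmetric] by algebra
    then have "b^2 * (X^2 + Y^2 - 1) = 0" using R by simp
    then have XY: "X^2 + Y^2 = 1" using b0 by simp
    define u where "u = X * b - Y * a"
    define w where "w = Y * b + X * a"
    have "u^2 + w^2 = (X^2 + Y^2) * (a^2 + b^2)" unfolding u_def w_def by algebra
    then have "u^2 + w^2 = 1" using XY ab by simp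
    then obtain x where x: "0 \<le> x" "x < 2*pi" "u = cos x" "w = sin x" using sincos_total_2pi by metis
    have cx: "cos (x - th) = X"
    proof -
      have "cos (x - th) = u * b + w * a" unfolding cos_diff x(3,4) a_def b_def by simp
      also have "\<dots> = X * (a^2 + b^2)" unfolding u_def w_def by algebra
      finally show ?thesis using ab by simp
    qed
    have sx: "sin (x - th) = Y"
    proof -
      have "sin (x - th) = w * b - u * a" unfolding sin_diff x(3,4) a_def b_def by simp
      also have "\<dots> = Y * (a^2 + b^2)" unfolding u_def w_def by algebra
      finally show ?thesis using ab by simp
    qed
    have "PP x d v = 0" unfolding PPe cx sx using bY by simp
    then have "x \<in> S" unfolding S_def using x by simp
    moreover have "X = f x" unfolding f_def cx ..
    ultimately show "X \<in> f ` S" by blast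
  qed
  show "card {x\<in>{0..<2*pi}. PP x d v = 0} = card {X. Rq (sin th) (cos th) d X = 0}"
    using card_image[OF inj] img unfolding S_def a_def b_def by simp
  show "sin th ^2 + cos th ^2 = 1" by simp
  show "cos th > 0" using b0 unfolding b_def .
  show "sin v = 2 * cos th ^ 2 - 1" using sv unfolding b_def .
qed


lemma double_root:
  fixes d v x :: real
  assumes P: "PP x d v = 0" and P1: "2*d*cos(2*x+v) - cos x = 0"
  shows "gam d v = 0" and "d \<noteq> 0"
proof -
  define S where "S = sin (2*x+v)"
  define C where "C = cos (2*x+v)"
  define p where "p = sin x"
  define q where "q = cos x"
  have hS: "d * S = p" using P unfolding PP_def S_def p_def by simp
  have hC: "2 * d * C = q" using P1 unfolding C_def q_def by simp
  have SC: "S^2 + C^2 = 1" unfolding S_def C_def by simp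
  have pq: "p^2 + q^2 = 1" unfolding p_def q_def by simp
  have sv: "sin v = S * (1 - 2*p^2) - C * (2*p*q)"
  proof -
    have "sin v = sin ((2*x+v) - 2*x)" by simp
    also have "\<dots> = S * cos (2*x) - C * sin (2*x)" unfolding sin_diff S_def C_def ..
    finally show ?thesis unfolding cos_double_sin sin_double p_def q_def by (simp add: mult.assoc)
  qed
  have h4: "4*d^2 - 1 = 3*p^2"
  proof -
    have "4*d^2 = 4*(d * S)^2 + (2*d*C)^2 - 4*d^2*(S^2+C^2-1)" by algebra
    then show ?thesis using hS hC SC pq by simp
  qed
  have h5: "d * sin v = -(p^3)"
  proof -
    have "d * sin v = (d*S) * (1 - 2*p^2) - (2*d*C) * (p*q)" unfolding sv by algebra
    also have "\<dots> = p * (1 - 2*p^2) - q * (p*q)" using hS hC by simp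
    also have "\<dots> = p - 2*p^3 - p*q^2" by algebra
    also have "\<dots> = -(p^3)" using pq by algebra
    finally show ?thesis .
  qed
  have "gam d v = (4*d^2-1)^3 - 27*(d * sin v)^2" unfolding gam_def by algebra
  also have "\<dots> = 0" unfolding h4 h5 by algebra
  finally show "gam d v = 0" .
  show "d \<noteq> 0"
  proof
    assume "d = 0"
    then have "p = 0" "q = 0" using hS hC by auto
    then show False using pq by simp
  qed
qed

lemma triple_root:
  fixes d v x :: real
  assumes v0: "0 \<le> v" and v1: "v < pi"
  assumes P: "PP x d v = 0" and P1: "2*d*cos(2*x+v) - cos x = 0"
    and P2: "-4*d* sin(2*x+v) + sin x = 0"
  shows "v = 0" "sin x = 0" "cos x \<noteq> 0" "-8*d*cos(2*x+v) + cos x = -3 * cos x"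
proof -
  define S where "S = sin (2*x+v)"
  define C where "C = cos (2*x+v)"
  have hS: "d * S = sin x" using P unfolding PP_def S_def by simp
  have hC: "2 * d * C = cos x" using P1 unfolding C_def by simp
  have h2: "4 * d * S = sin x" using P2 unfolding S_def by simp
  have "4 * (d * S) = sin x" using h2 by (simp add: mult.assoc)
  then show sx: "sin x = 0" using hS by linarith
  have "cos x ^2 = 1" using sx sin_cos_squared_add[of x] by simp
  then show cx: "cos x \<noteq> 0" by auto
  then have d0: "d \<noteq> 0" and C0: "C \<noteq> 0" using hC by auto
  have S0: "S = 0" using hS sx d0 by simp
  have "sin v = sin ((2*x+v) - 2*x)" by simp
  also have "\<dots> = S * cos (2*x) - C * sin (2*x)" unfolding sin_diff S_def C_def ..
  also have "\<dots> = 0" unfolding S0 sin_double sx by simp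
  finally have "sin v = 0" .
  then show "v = 0" using v0 v1 sin_gt_zero[of v] by (cases "v = 0") auto
  have "-8*d*cos(2*x+v) = -4*(2*d*cos(2*x+v))" by simp
  then show "-8*d*cos(2*x+v) + cos x = -3 * cos x" using hC unfolding C_def by linarith
qed


theorem mainTheorem1:
  fixes \<delta> \<nu> :: real
  assumes "0 \<le> \<nu>" and "\<nu> < pi"
  shows "((\<delta>, \<nu>) \<in> Omega_plus \<longrightarrow> card {\<sigma>\<in>{0..<2*pi}. PP \<sigma> \<delta> \<nu> = 0} = 4)
    \<and> ((\<delta>, \<nu>) \<in> Omega_minus \<longrightarrow> card {\<sigma>\<in>{0..<2*pi}. PP \<sigma> \<delta> \<nu> = 0} = 2)
    \<and> ((\<delta>, \<nu>) \<notin> gamma_plus \<union> gamma_minus \<longrightarrow>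
         (\<forall>\<sigma>\<in>{0..<2*pi}. PP \<sigma> \<delta> \<nu> = 0 \<longrightarrow> PPd 1 \<sigma> \<delta> \<nu> \<noteq> 0))
    \<and> (\<forall>\<sigma>\<in>{0..<2*pi}. PP \<sigma> \<delta> \<nu> = 0 \<and> PPd 1 \<sigma> \<delta> \<nu> = 0 \<and> PPd 2 \<sigma> \<delta> \<nu> = 0 \<longrightarrow>
         \<nu> = 0 \<and> sin \<sigma> = 0 \<and> PPd 3 \<sigma> \<delta> \<nu> = - 3 * cos \<sigma> \<and> - 3 * cos \<sigma> \<noteq> 0)"
proof -
  define th where "th = pi/4 - \<nu>/2"
  have rc: "card {\<sigma>\<in>{0..<2*pi}. PP \<sigma> \<delta> \<nu> = 0} = card {X. Rq (sin th) (cos th) \<delta> X = 0}"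
    using roots_card(1)[where v=\<nu> and d=\<delta>, OF assms] unfolding th_def .
  have ab: "sin th ^2 + cos th ^2 = 1" by simp
  have b0: "cos th > 0" using roots_card(3)[where v=\<nu>, OF assms] unfolding th_def .
  have sv: "sin \<nu> = 2 * cos th ^ 2 - 1" using roots_card(4)[where v=\<nu>, OF assms] unfolding th_def .
  have gv: "gam \<delta> \<nu> = (4*\<delta>^2-1)^3 - 27*\<delta>^2*(2*cos th^2 - 1)^2" unfolding gam_def sv ..
  have g0: "\<delta> = 0 \<Longrightarrow> gam \<delta> \<nu> = -1" unfolding gam_def by simp
  show ?thesis
  proof (intro conjI)
    show "(\<delta>, \<nu>) \<in> Omega_plus \<longrightarrow> card {\<sigma>\<in>{0..<2*pi}. PP \<sigma> \<delta> \<nu> = 0} = 4"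
    proof
    assume "(\<delta>, \<nu>) \<in> Omega_plus"
    then have G: "gam \<delta> \<nu> > 0" unfolding Omega_plus_def by simp
    then have "\<delta> \<noteq> 0" using g0 by auto
    then show "card {\<sigma>\<in>{0..<2*pi}. PP \<sigma> \<delta> \<nu> = 0} = 4"
      using quartic_count[OF ab b0] G unfolding rc gv by blast
    qed
  next
    show "(\<delta>, \<nu>) \<in> Omega_minus \<longrightarrow> card {\<sigma>\<in>{0..<2*pi}. PP \<sigma> \<delta> \<nu> = 0} = 2"
    proof
    assume "(\<delta>, \<nu>) \<in> Omega_minus"
    then have G: "gam \<delta> \<nu> < 0" unfolding Omega_minus_def by simp
    show "card {\<sigma>\<in>{0..<2*pi}. PP \<sigma> \<delta> \<nu> = 0} = 2"
    proof (cases "\<delta> = 0")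
      case True
      then show ?thesis unfolding rc using zero_count[OF ab b0] by simp
    next
      case False
      then show ?thesis using quartic_count[OF ab b0] G unfolding rc gv by blast
    qed
    qed
  next
    show "(\<delta>, \<nu>) \<notin> gamma_plus \<union> gamma_minus \<longrightarrow>
         (\<forall>\<sigma>\<in>{0..<2*pi}. PP \<sigma> \<delta> \<nu> = 0 \<longrightarrow> PPd 1 \<sigma> \<delta> \<nu> \<noteq> 0)"
    proof (rule impI, rule ballI)
    fix \<sigma> :: real
    assume ng: "(\<delta>, \<nu>) \<notin> gamma_plus \<union> gamma_minus" and "\<sigma> \<in> {0..<2*pi}"
    show "PP \<sigma> \<delta> \<nu> = 0 \<longrightarrow> PPd 1 \<sigma> \<delta> \<nu> \<noteq> 0"
    proof (intro impI notI)
      assume P: "PP \<sigma> \<delta> \<nu> = 0" and P1: "PPd 1 \<sigma> \<delta> \<nu> = 0"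
      have P1': "2*\<delta>*cos(2*\<sigma>+\<nu>) - cos \<sigma> = 0" using P1 unfolding PPd1 .
      have "gam \<delta> \<nu> = 0" "\<delta> \<noteq> 0" using double_root[OF P P1'] by auto
      then have "(\<delta>, \<nu>) \<in> gamma_plus \<union> gamma_minus"
        unfolding gamma_plus_def gamma_minus_def using assms by auto
      then show False using ng by simp
    qed
    qed
  next
    show "\<forall>\<sigma>\<in>{0..<2*pi}. PP \<sigma> \<delta> \<nu> = 0 \<and> PPd 1 \<sigma> \<delta> \<nu> = 0 \<and> PPd 2 \<sigma> \<delta> \<nu> = 0 \<longrightarrow>
         \<nu> = 0 \<and> sin \<sigma> = 0 \<and> PPd 3 \<sigma> \<delta> \<nu> = - 3 * cos \<sigma> \<and> - 3 * cos \<sigma> \<noteq> 0"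
    proof
    fix \<sigma> :: real
    assume "\<sigma> \<in> {0..<2*pi}"
    show "PP \<sigma> \<delta> \<nu> = 0 \<and> PPd 1 \<sigma> \<delta> \<nu> = 0 \<and> PPd 2 \<sigma> \<delta> \<nu> = 0 \<longrightarrow>
         \<nu> = 0 \<and> sin \<sigma> = 0 \<and> PPd 3 \<sigma> \<delta> \<nu> = - 3 * cos \<sigma> \<and> - 3 * cos \<sigma> \<noteq> 0"
    proof
      assume H: "PP \<sigma> \<delta> \<nu> = 0 \<and> PPd 1 \<sigma> \<delta> \<nu> = 0 \<and> PPd 2 \<sigma> \<delta> \<nu> = 0"
      have P: "PP \<sigma> \<delta> \<nu> = 0" using H by simp
      have P1: "2*\<delta>*cos(2*\<sigma>+\<nu>) - cos \<sigma> = 0" using H unfolding PPd1 by simp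
      have P2: "-4*\<delta> * sin(2*\<sigma>+\<nu>) + sin \<sigma> = 0" using H unfolding PPd2 by simp
      note T = triple_root[OF assms P P1 P2]
      show "\<nu> = 0 \<and> sin \<sigma> = 0 \<and> PPd 3 \<sigma> \<delta> \<nu> = - 3 * cos \<sigma> \<and> - 3 * cos \<sigma> \<noteq> 0"
        using T unfolding PPd3 by simp
    qed
    qed
  qed
qed

end
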